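(* Let $n\in\mathbb N$, $W=\{w_1,\dots,w_n\}$, $M=\{m_1,\dots,m_n\}$ disjoint, and let $\mu_{\mathrm{id}}$ be the perfect marriage marrying $w_i$ to $m_i$ for every $i$. Let $D=\{(i,j)\in\{1,\dots,n\}^2: i\ne j\}$. There exist functions $\succ_W:\{0,1\}^{D}\to\mathcal F(W,M)$ and $\succ_M:\{0,1\}^{D}\to\mathcal F(M,W)$ such that for all $\bar x=(x^i_j)_{(i,j)\in D}$ and $\bar y=(y^i_j)_{(i,j)\in D}$ in $\{0,1\}^D$, the following are equivalent: (1) $\mu_{\mathrm{id}}$ is stable with respect to $\succ_W(\bar x)$ and $\succ_M(\bar y)$; (2) $\mathrm{DISJ}(\bar x,\bar y)=1$.
   Context: $\mathcal F(W,M)$ is the set of profiles assigning each woman a total order on $M$; $\mathcal F(M,W)$ analogously for men. A pair $(w,m)$ is blocking for a perfect marriage $\mu$ if $w$ prefers $m$ to her spouse in $\mu$ and $m$ prefers $w$ to his spouse in $\mu$; $\mu$ is stable if it has no blocking pair. $\mathrm{DISJ}(\bar x,\bar y)=1$ if there is no index $(i,j)$ with $x^i_j=y^i_j=1$, and $0$ otherwise. *)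

theory Defs
  imports Main
begin

text \<open>Women w_1..w_n and men m_1..m_n are encoded by indices 0..n-1
  (woman i and man i are different objects, living in separate roles).
  A preference relation R of one agent is a linear order (reflexive, in the
  sense of linear_order_on) on the index set of the other side;
  (a,b) in R means a is ranked at least as high as b.\<close>

definition agents :: "nat \<Rightarrow> nat set" where
  "agents n = {..<n}"

definition strictly_prefers :: "(nat \<times> nat) set \<Rightarrow> nat \<Rightarrow> nat \<Rightarrow> bool" where
  "strictly_prefers R a b \<longleftrightarrow> (a, b) \<in> R \<and> a \<noteq> b"

text \<open>A profile in F(W,M) (resp. F(M,W)): each agent of one side gets a total
  order on the other side.\<close>
definition profile :: "nat \<Rightarrow> (nat \<Rightarrow> (nat \<times> nat) set) \<Rightarrow> bool" where
  "profile n P \<longleftrightarrow> (\<forall>i\<in>agents n. linear_order_on (agents n) (P i))"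

definition perfect_marriage :: "nat \<Rightarrow> (nat \<Rightarrow> nat) \<Rightarrow> bool" where
  "perfect_marriage n mu \<longleftrightarrow> bij_betw mu (agents n) (agents n)"

definition blocking_pair ::
  "nat \<Rightarrow> (nat \<Rightarrow> nat) \<Rightarrow> (nat \<Rightarrow> (nat \<times> nat) set) \<Rightarrow> (nat \<Rightarrow> (nat \<times> nat) set)
     \<Rightarrow> nat \<Rightarrow> nat \<Rightarrow> bool" where
  "blocking_pair n mu PW PM w m \<longleftrightarrow>
     w \<in> agents n \<and> m \<in> agents n \<and>
     strictly_prefers (PW w) m (mu w) \<and>
     strictly_prefers (PM m) w (inv_into (agents n) mu m)"

definition stable ::
  "nat \<Rightarrow> (nat \<Rightarrow> nat) \<Rightarrow> (nat \<Rightarrow> (nat \<times> nat) set) \<Rightarrow> (nat \<Rightarrow> (nat \<times> nat) set) \<Rightarrow> bool" where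
  "stable n mu PW PM \<longleftrightarrow> \<not> (\<exists>w m. blocking_pair n mu PW PM w m)"

definition mu_id :: "nat \<Rightarrow> nat" where
  "mu_id = id"

definition D :: "nat \<Rightarrow> (nat \<times> nat) set" where
  "D n = {(i, j). i < n \<and> j < n \<and> i \<noteq> j}"

text \<open>{0,1}^D, as boolean functions that are False outside D (extensional).\<close>
definition bitvecs :: "nat \<Rightarrow> (nat \<times> nat \<Rightarrow> bool) set" where
  "bitvecs n = {x. \<forall>p. p \<notin> D n \<longrightarrow> \<not> x p}"

definition DISJ :: "nat \<Rightarrow> (nat \<times> nat \<Rightarrow> bool) \<Rightarrow> (nat \<times> nat \<Rightarrow> bool) \<Rightarrow> bool" where
  "DISJ n x y \<longleftrightarrow> \<not> (\<exists>p\<in>D n. x p \<and> y p)"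

end

theory Submission
  imports Defs
begin

lemma lin_of_inj:
  assumes "inj_on h A"
  shows "linear_order_on A {(a,b). a\<in>A \<and> b\<in>A \<and> (h a::nat) \<le> h b}"
  using assms unfolding linear_order_on_def partial_order_on_def preorder_on_def
    refl_on_def trans_def antisym_def total_on_def inj_on_def
  by (auto intro: order_antisym)

definition RW :: "nat \<Rightarrow> (nat \<times> nat \<Rightarrow> bool) \<Rightarrow> nat \<Rightarrow> (nat \<times> nat) set" where
  "RW n x i = {(a,b). a\<in>agents n \<and> b\<in>agents n \<and>
     (if a = i then 1 else if x (i,a) then 0 else 2) * n + a
     \<le> (if b = i then 1 else if x (i,b) then 0 else (2::nat)) * n + b}"

definition RM :: "nat \<Rightarrow> (nat \<times> nat \<Rightarrow> bool) \<Rightarrow> nat \<Rightarrow> (nat \<times> nat) set" where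
  "RM n y j = {(a,b). a\<in>agents n \<and> b\<in>agents n \<and>
     (if a = j then 1 else if y (a,j) then 0 else 2) * n + a
     \<le> (if b = j then 1 else if y (b,j) then 0 else (2::nat)) * n + b}"

lemma inj_key:
  fixes k :: "nat \<Rightarrow> nat"
  shows "inj_on (\<lambda>a. k a * n + a) (agents n)"
proof (rule inj_onI)
  fix a b assume a: "a \<in> agents n" and b: "b \<in> agents n" and e: "k a * n + a = k b * n + b"
  from a b have "a < n" "b < n" by (auto simp: agents_def)
  then have "(k a * n + a) mod n = a" "(k b * n + b) mod n = b" by auto
  with e show "a = b" by simp
qed

lemma profW: "profile n (RW n x)"
  unfolding profile_def RW_def
proof
  fix i
  show "linear_order_on (agents n) {(a,b). a\<in>agents n \<and> b\<in>agents n \<and>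
     (if a = i then 1 else if x (i,a) then 0 else 2) * n + a
     \<le> (if b = i then 1 else if x (i,b) then 0 else (2::nat)) * n + b}"
    by (rule lin_of_inj[OF inj_key[of "\<lambda>a. if a = i then 1 else if x (i,a) then 0 else 2" n]])
qed

lemma profM: "profile n (RM n y)"
  unfolding profile_def RM_def
proof
  fix i
  show "linear_order_on (agents n) {(a,b). a\<in>agents n \<and> b\<in>agents n \<and>
     (if a = i then 1 else if y (a,i) then 0 else 2) * n + a
     \<le> (if b = i then 1 else if y (b,i) then 0 else (2::nat)) * n + b}"
    by (rule lin_of_inj[OF inj_key[of "\<lambda>a. if a = i then 1 else if y (a,i) then 0 else 2" n]])
qed

lemma blockW:
  assumes "w < n" "m < n"
  shows "strictly_prefers (RW n x w) m w \<longleftrightarrow> m \<noteq> w \<and> x (w,m)"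
  using assms unfolding strictly_prefers_def RW_def agents_def by auto

lemma blockM:
  assumes "w < n" "m < n"
  shows "strictly_prefers (RM n y m) w m \<longleftrightarrow> m \<noteq> w \<and> y (w,m)"
  using assms unfolding strictly_prefers_def RM_def agents_def by auto

theorem lemma14:
  fixes n :: nat
  shows "\<exists>(FW :: (nat \<times> nat \<Rightarrow> bool) \<Rightarrow> nat \<Rightarrow> (nat \<times> nat) set)
           (FM :: (nat \<times> nat \<Rightarrow> bool) \<Rightarrow> nat \<Rightarrow> (nat \<times> nat) set).
           (\<forall>x\<in>bitvecs n. profile n (FW x)) \<and>
           (\<forall>y\<in>bitvecs n. profile n (FM y)) \<and>
           (\<forall>x\<in>bitvecs n. \<forall>y\<in>bitvecs n.
              stable n mu_id (FW x) (FM y) \<longleftrightarrow> DISJ n x y)"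
proof (intro exI conjI ballI)
  fix x y assume x: "x \<in> bitvecs n" and y: "y \<in> bitvecs n"
  have inv: "m < n \<Longrightarrow> inv_into (agents n) id m = m" for m
    by (simp add: agents_def inv_into_f_eq)
  have "blocking_pair n mu_id (RW n x) (RM n y) w m \<longleftrightarrow> (w,m) \<in> D n \<and> x (w,m) \<and> y (w,m)" for w m
    unfolding blocking_pair_def mu_id_def
    using blockW[of w n m x] blockM[of w n m y] inv[of m]
    by (auto simp: agents_def D_def)
  then show "stable n mu_id (RW n x) (RM n y) \<longleftrightarrow> DISJ n x y"
    unfolding stable_def DISJ_def by auto
qed (auto simp: profW profM)

end
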